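(* Let $G$ be the three-player game with $A_i=\{a_{i1},a_{i2}\}$ for $i=1,2,3$ and fitness vectors $\pi(a_{11},a_{21},a_{31})=(7,7,7)$, $\pi(a_{11},a_{22},a_{31})=(9,6,0)$, $\pi(a_{12},a_{21},a_{31})=(6,0,9)$, $\pi(a_{12},a_{22},a_{31})=(6,0,9)$, $\pi(a_{11},a_{21},a_{32})=(0,9,6)$, $\pi(a_{11},a_{22},a_{32})=(9,6,0)$, $\pi(a_{12},a_{21},a_{32})=(0,9,6)$, $\pi(a_{12},a_{22},a_{32})=(1,1,1)$. Then the profile $(a_{11},a_{21},a_{31})$, which is a Pareto-efficient strict Nash equilibrium of $G$, is not stable under perfect observability.
   Context: Preference types: $\Theta=\mathbb{R}^A$, $A=A_1\times A_2\times A_3$ (utility functions on $A$, extended multilinearly to mixed profiles); $\pi_i$ likewise extended. $\mathcal{M}(\Theta^3)$ is the set of product distributions $\mu=\mu_1\times\mu_2\times\mu_3$ with finitely supported marginals; $\operatorname{supp}\mu=\prod_i\operatorname{supp}\mu_i$, $\mu(\theta)=\prod_i\mu_i(\theta_i)$, $\mu_{-i}(\theta_{-i})=\prod_{j\ne i}\mu_j(\theta_j)$. Mutants: for nonempty $J\subseteq N=\{1,2,3\}$, a mutant sub-profile is $\tilde\theta_J\in\prod_{j\in J}(\Theta\setminus\operatorname{supp}\mu_j)$ with shares $\varepsilon\in(0,1)^{|J|}$, $\|\varepsilon\|=\max_j\varepsilon_j$; post-entry $\tilde\mu^\varepsilon_i=(1-\varepsilon_i)\mu_i+\varepsilon_i\delta_{\tilde\theta_i}$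 for $i\in J$, $\tilde\mu^\varepsilon_i=\mu_i$ otherwise. Perfect observability: an equilibrium is a map $b:\operatorname{supp}\mu\to\prod_i\Delta(A_i)$ such that each $b(\theta)$ is a Nash equilibrium of the game with payoffs $\theta_1,\theta_2,\theta_3$; $B_1(\mu)$ is the set of these; $(\mu,b)$ is a configuration, with aggregate outcome $\varphi_{\mu,b}(a)=\sum_{\theta}\mu(\theta)\prod_i b_i(\theta)(a_i)$. Average fitness $\Pi_{\theta_i}(\mu;b)=\sum_{\theta'_{-i}}\mu_{-i}(\theta'_{-i})\pi_i(b(\theta_i,\theta'_{-i}))$. Balanced: equal average fitness of all types within each population. Focal set $B_1(\tilde\mu^\varepsilon;b)=\{\tilde b\in B_1(\tilde\mu^\varepsilon):\tilde b=b\text{ on }\operatorname{supp}\mu\}$. $(\mu,b)$ is stable if balanced and for every nonempty $J$ and every $\tilde\theta_J$ there is $\bar\epsilon\in(0,1)$ such that for all $\varepsilon$ with $\|\varepsilon\|<\bar\epsilon$ and all $\tilde b$ in the focal set, either (i) some $j\in J$ has $\Pi_{\theta_j}(\tilde\mu^\varepsilon;\tilde b)>\Pi_{\tilde\theta_j}(\tilde\mu^\varepsilon;\tilde b)$ for all $\theta_j\in\operatorname{supp}\mu_j$, or (ii) for every $i$ all types in $\operatorname{supp}\tilde\mu^\varepsilon_i$ have equal average fitness. A pure profile $a$ is stable if the point mass at $a$ is the aggregate outcome of a stable configuration. *)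

theory Defs
  imports Complex_Main
begin

datatype pl = P1 | P2 | P3

instance pl :: finite
proof
  have "(UNIV :: pl set) = {P1, P2, P3}" by (auto intro: pl.exhaust)
  then show "finite (UNIV :: pl set)" by (metis finite.emptyI finite_insert)
qed

text \<open>act: X1 stands for a_{i1}, X2 for a_{i2} (same labels for each player i).\<close>
datatype act = X1 | X2

instance act :: finite
proof
  have "(UNIV :: act set) = {X1, X2}" by (auto intro: act.exhaust)
  then show "finite (UNIV :: act set)" by (metis finite.emptyI finite_insert)
qed

text \<open>A preference type / fitness function is a real function on pure profiles
  ('p => 'a); mixed profiles are 'p => 'a => real; EU is the multilinear extension.\<close>

definition EU :: "(('p::finite \<Rightarrow> 'a::finite) \<Rightarrow> real) \<Rightarrow> ('p \<Rightarrow> 'a \<Rightarrow> real) \<Rightarrow> real" where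
  "EU u \<sigma> = (\<Sum>a\<in>UNIV. u a * (\<Prod>i\<in>UNIV. \<sigma> i (a i)))"

definition mixed :: "('a::finite \<Rightarrow> real) \<Rightarrow> bool" where
  "mixed s \<longleftrightarrow> (\<forall>x. 0 \<le> s x) \<and> sum s UNIV = 1"

definition nash :: "('p::finite \<Rightarrow> ('p \<Rightarrow> 'a::finite) \<Rightarrow> real) \<Rightarrow> ('p \<Rightarrow> 'a \<Rightarrow> real) \<Rightarrow> bool" where
  "nash u \<sigma> \<longleftrightarrow> (\<forall>i. mixed (\<sigma> i)) \<and>
     (\<forall>i s. mixed s \<longrightarrow> EU (u i) (\<sigma>(i := s)) \<le> EU (u i) \<sigma>)"

definition strict_nash_pure :: "('p \<Rightarrow> ('p \<Rightarrow> 'a) \<Rightarrow> real) \<Rightarrow> ('p \<Rightarrow> 'a) \<Rightarrow> bool" where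
  "strict_nash_pure u a \<longleftrightarrow> (\<forall>i x. x \<noteq> a i \<longrightarrow> u i (a(i := x)) < u i a)"

definition pareto_efficient :: "('p \<Rightarrow> ('p \<Rightarrow> 'a) \<Rightarrow> real) \<Rightarrow> ('p \<Rightarrow> 'a) \<Rightarrow> bool" where
  "pareto_efficient u a \<longleftrightarrow>
     \<not> (\<exists>a'. (\<forall>i. u i a \<le> u i a') \<and> (\<exists>i. u i a < u i a'))"

definition supp :: "('b \<Rightarrow> real) \<Rightarrow> 'b set" where
  "supp d = {t. d t \<noteq> 0}"

definition findist :: "('b \<Rightarrow> real) \<Rightarrow> bool" where
  "findist d \<longleftrightarrow> finite (supp d) \<and> (\<forall>t. 0 \<le> d t) \<and> sum d (supp d) = 1"

text \<open>mu : 'p => (preference type => probability); a product distribution in M(Theta^3).\<close>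
definition popdist :: "('p \<Rightarrow> 'b \<Rightarrow> real) \<Rightarrow> bool" where
  "popdist \<mu> \<longleftrightarrow> (\<forall>i. findist (\<mu> i))"

definition suppP :: "('p \<Rightarrow> 'b \<Rightarrow> real) \<Rightarrow> ('p \<Rightarrow> 'b) set" where
  "suppP \<mu> = {\<theta>. \<forall>i. \<theta> i \<in> supp (\<mu> i)}"

definition equil :: "('p::finite \<Rightarrow> (('p \<Rightarrow> 'a::finite) \<Rightarrow> real) \<Rightarrow> real)
     \<Rightarrow> (('p \<Rightarrow> (('p \<Rightarrow> 'a) \<Rightarrow> real)) \<Rightarrow> ('p \<Rightarrow> 'a \<Rightarrow> real)) \<Rightarrow> bool" where
  "equil \<mu> b \<longleftrightarrow> (\<forall>\<theta>\<in>suppP \<mu>. nash \<theta> (b \<theta>))"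

definition outcome :: "('p::finite \<Rightarrow> (('p \<Rightarrow> 'a::finite) \<Rightarrow> real) \<Rightarrow> real)
     \<Rightarrow> (('p \<Rightarrow> (('p \<Rightarrow> 'a) \<Rightarrow> real)) \<Rightarrow> ('p \<Rightarrow> 'a \<Rightarrow> real)) \<Rightarrow> ('p \<Rightarrow> 'a) \<Rightarrow> real" where
  "outcome \<mu> b a = (\<Sum>\<theta>\<in>suppP \<mu>. (\<Prod>i\<in>UNIV. \<mu> i (\<theta> i)) * (\<Prod>i\<in>UNIV. b \<theta> i (a i)))"

definition avgfit :: "('p::finite \<Rightarrow> ('p \<Rightarrow> 'a::finite) \<Rightarrow> real)
     \<Rightarrow> ('p \<Rightarrow> (('p \<Rightarrow> 'a) \<Rightarrow> real) \<Rightarrow> real)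
     \<Rightarrow> (('p \<Rightarrow> (('p \<Rightarrow> 'a) \<Rightarrow> real)) \<Rightarrow> ('p \<Rightarrow> 'a \<Rightarrow> real))
     \<Rightarrow> 'p \<Rightarrow> (('p \<Rightarrow> 'a) \<Rightarrow> real) \<Rightarrow> real" where
  "avgfit \<pi> \<mu> b i t =
     (\<Sum>\<theta>\<in>{\<theta>\<in>suppP \<mu>. \<theta> i = t}. (\<Prod>j\<in>UNIV - {i}. \<mu> j (\<theta> j)) * EU (\<pi> i) (b \<theta>))"

definition balanced :: "('p::finite \<Rightarrow> ('p \<Rightarrow> 'a::finite) \<Rightarrow> real)
     \<Rightarrow> ('p \<Rightarrow> (('p \<Rightarrow> 'a) \<Rightarrow> real) \<Rightarrow> real)
     \<Rightarrow> (('p \<Rightarrow> (('p \<Rightarrow> 'a) \<Rightarrow> real)) \<Rightarrow> ('p \<Rightarrow> 'a \<Rightarrow> real)) \<Rightarrow> bool" where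
  "balanced \<pi> \<mu> b \<longleftrightarrow>
     (\<forall>i. \<forall>t\<in>supp (\<mu> i). \<forall>t'\<in>supp (\<mu> i). avgfit \<pi> \<mu> b i t = avgfit \<pi> \<mu> b i t')"

definition postentry :: "('p \<Rightarrow> 'b \<Rightarrow> real) \<Rightarrow> 'p set \<Rightarrow> ('p \<Rightarrow> 'b) \<Rightarrow> ('p \<Rightarrow> real)
     \<Rightarrow> ('p \<Rightarrow> 'b \<Rightarrow> real)" where
  "postentry \<mu> J thm eps = (\<lambda>i. if i \<in> J
      then (\<lambda>t. (1 - eps i) * \<mu> i t + eps i * (if t = thm i then 1 else 0))
      else \<mu> i)"

definition stable :: "('p::finite \<Rightarrow> ('p \<Rightarrow> 'a::finite) \<Rightarrow> real)
     \<Rightarrow> ('p \<Rightarrow> (('p \<Rightarrow> 'a) \<Rightarrow> real) \<Rightarrow> real)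
     \<Rightarrow> (('p \<Rightarrow> (('p \<Rightarrow> 'a) \<Rightarrow> real)) \<Rightarrow> ('p \<Rightarrow> 'a \<Rightarrow> real)) \<Rightarrow> bool" where
  "stable \<pi> \<mu> b \<longleftrightarrow> balanced \<pi> \<mu> b \<and>
     (\<forall>J thm. J \<noteq> {} \<and> (\<forall>j\<in>J. thm j \<notin> supp (\<mu> j)) \<longrightarrow>
        (\<exists>eb. 0 < eb \<and> eb < 1 \<and>
          (\<forall>eps. (\<forall>j\<in>J. 0 < eps j \<and> eps j < 1 \<and> eps j < eb) \<longrightarrow>
             (\<forall>b'. equil (postentry \<mu> J thm eps) b' \<and> (\<forall>\<theta>\<in>suppP \<mu>. b' \<theta> = b \<theta>) \<longrightarrow>
                ((\<exists>j\<in>J. \<forall>t\<in>supp (\<mu> j).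
                    avgfit \<pi> (postentry \<mu> J thm eps) b' j t
                      > avgfit \<pi> (postentry \<mu> J thm eps) b' j (thm j))
                 \<or> balanced \<pi> (postentry \<mu> J thm eps) b')))))"

definition stable_profile :: "('p::finite \<Rightarrow> ('p \<Rightarrow> 'a::finite) \<Rightarrow> real) \<Rightarrow> ('p \<Rightarrow> 'a) \<Rightarrow> bool" where
  "stable_profile \<pi> a \<longleftrightarrow> (\<exists>\<mu> b. popdist \<mu> \<and> equil \<mu> b \<and> stable \<pi> \<mu> b \<and>
      (\<forall>a'. outcome \<mu> b a' = (if a' = a then 1 else 0)))"

fun fitvec :: "act \<Rightarrow> act \<Rightarrow> act \<Rightarrow> real \<times> real \<times> real" where
  "fitvec X1 X1 X1 = (7, 7, 7)"
| "fitvec X1 X2 X1 = (9, 6, 0)"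
| "fitvec X2 X1 X1 = (6, 0, 9)"
| "fitvec X2 X2 X1 = (6, 0, 9)"
| "fitvec X1 X1 X2 = (0, 9, 6)"
| "fitvec X1 X2 X2 = (9, 6, 0)"
| "fitvec X2 X1 X2 = (0, 9, 6)"
| "fitvec X2 X2 X2 = (1, 1, 1)"

fun pick :: "pl \<Rightarrow> real \<times> real \<times> real \<Rightarrow> real" where
  "pick P1 v = fst v"
| "pick P2 v = fst (snd v)"
| "pick P3 v = snd (snd v)"

definition piG :: "pl \<Rightarrow> (pl \<Rightarrow> act) \<Rightarrow> real" where
  "piG i a = pick i (fitvec (a P1) (a P2) (a P3))"

end

theory Submission
  imports Defs "HOL-Library.FuncSet"
begin

definition dlt :: "('p \<Rightarrow> 'a) \<Rightarrow> 'p \<Rightarrow> 'a \<Rightarrow> real" where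
  "dlt a = (\<lambda>i y. if y = a i then 1 else 0)"

lemma prod_dlt_upd:
  fixes a :: "'p::finite \<Rightarrow> 'a"
  shows "(\<Prod>j\<in>UNIV. ((dlt a)(i := s)) j (a' j)) = (if a' = a(i := a' i) then s (a' i) else 0)"
proof -
  have U: "(UNIV::'p set) = insert i (UNIV - {i})" by auto
  have "(\<Prod>j\<in>UNIV. ((dlt a)(i := s)) j (a' j)) = s (a' i) * (\<Prod>j\<in>UNIV-{i}. dlt a j (a' j))"
    by (subst U, subst prod.insert) (auto intro!: prod.cong)
  also have "(\<Prod>j\<in>UNIV-{i}. dlt a j (a' j)) = (if (\<forall>j\<in>UNIV-{i}. a' j = a j) then 1 else 0)"
  proof (cases "\<forall>j\<in>UNIV-{i}. a' j = a j")
    case True then show ?thesis by (simp add: dlt_def)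
  next
    case False then obtain j where "j \<noteq> i" "a' j \<noteq> a j" by auto
    then show ?thesis using False by (auto simp: dlt_def intro!: prod_zero)
  qed
  also have "(\<forall>j\<in>UNIV-{i}. a' j = a j) \<longleftrightarrow> a' = a(i := a' i)"
    by (auto simp: fun_eq_iff)
  finally show ?thesis by simp
qed

lemma EU_dev:
  fixes a :: "'p::finite \<Rightarrow> 'a::finite"
  shows "EU v ((dlt a)(i := s)) = (\<Sum>x\<in>UNIV. s x * v (a(i := x)))"
proof -
  have "EU v ((dlt a)(i := s)) = (\<Sum>a'\<in>UNIV. if a' = a(i := a' i) then v a' * s (a' i) else 0)"
    unfolding EU_def prod_dlt_upd by (auto intro: sum.cong)
  also have "\<dots> = (\<Sum>a'\<in>range (\<lambda>x. a(i:=x)). v a' * s (a' i))"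
  proof -
    have "UNIV \<inter> {a'. a' = a(i := a' i)} = range (\<lambda>x. a(i:=x))" by auto
    then show ?thesis by (simp add: sum.inter_filter[symmetric])
  qed
  also have "\<dots> = (\<Sum>x\<in>UNIV. v (a(i:=x)) * s x)"
    by (subst sum.reindex) (auto simp: inj_on_def fun_eq_iff)
  finally show ?thesis by (simp add: mult.commute)
qed

lemma sum_delta_mult:
  fixes f :: "'a::finite \<Rightarrow> real"
  shows "(\<Sum>x\<in>UNIV. (if x = c then 1 else 0) * f x) = f c"
proof -
  have "(\<lambda>x. (if x = c then 1 else 0) * f x) = (\<lambda>x. if x = c then f x else 0)" by auto
  then show ?thesis by (simp only: sum.delta finite_UNIV) simp
qed

lemma EU_pure:
  fixes a :: "'p::finite \<Rightarrow> 'a::finite"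
  shows "EU v (dlt a) = v a"
proof -
  have "dlt a = (dlt a)(undefined := dlt a undefined)" by simp
  then have "EU v (dlt a) = (\<Sum>x\<in>UNIV. dlt a undefined x * v (a(undefined := x)))"
    by (metis EU_dev)
  also have "\<dots> = v a" unfolding dlt_def by (subst sum_delta_mult) simp
  finally show ?thesis .
qed

lemma mixed_dlt: "mixed (dlt a i)"
  unfolding mixed_def dlt_def by simp

lemma nash_pure:
  fixes a :: "'p::finite \<Rightarrow> 'a::finite"
  shows "nash u (dlt a) \<longleftrightarrow> (\<forall>i x. u i (a(i:=x)) \<le> u i a)"
proof
  assume N: "nash u (dlt a)"
  show "\<forall>i x. u i (a(i:=x)) \<le> u i a"
  proof (intro allI)
    fix i x
    have "mixed (dlt (a(i:=x)) i)" by (rule mixed_dlt)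
    with N have "EU (u i) ((dlt a)(i := dlt (a(i:=x)) i)) \<le> EU (u i) (dlt a)"
      unfolding nash_def by blast
    then show "u i (a(i:=x)) \<le> u i a"
      by (simp only: EU_dev EU_pure) (simp add: dlt_def sum_delta_mult)
  qed
next
  assume H: "\<forall>i x. u i (a(i:=x)) \<le> u i a"
  show "nash u (dlt a)"
    unfolding nash_def
  proof (intro conjI allI impI)
    fix i show "mixed (dlt a i)" by (rule mixed_dlt)
  next
    fix i s assume s: "mixed (s::'a \<Rightarrow> real)"
    have "EU (u i) ((dlt a)(i := s)) = (\<Sum>x\<in>UNIV. s x * u i (a(i := x)))" by (rule EU_dev)
    also have "\<dots> \<le> (\<Sum>x\<in>UNIV. s x * u i a)"
      using s H by (intro sum_mono mult_left_mono) (auto simp: mixed_def)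
    also have "\<dots> = u i a" using s by (simp add: mixed_def sum_distrib_right[symmetric])
    finally show "EU (u i) ((dlt a)(i := s)) \<le> EU (u i) (dlt a)" by (simp add: EU_pure)
  qed
qed

definition prof :: "act \<Rightarrow> act \<Rightarrow> act \<Rightarrow> pl \<Rightarrow> act" where
  "prof x y z = (\<lambda>p. case p of P1 \<Rightarrow> x | P2 \<Rightarrow> y | P3 \<Rightarrow> z)"

lemma prof_app[simp]: "prof x y z P1 = x" "prof x y z P2 = y" "prof x y z P3 = z"
  by (simp_all add: prof_def)

lemma prof_upd[simp]: "(prof x y z)(P1 := w) = prof w y z" "(prof x y z)(P2 := w) = prof x w z"
  "(prof x y z)(P3 := w) = prof x y w"
  by (auto simp: prof_def fun_eq_iff split: pl.splits)

lemma allX1: "(\<lambda>_. X1) = prof X1 X1 X1"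
  by (auto simp: prof_def fun_eq_iff split: pl.splits)

lemma UNIV_act: "(UNIV :: act set) = {X1, X2}" by (auto intro: act.exhaust)
lemma UNIV_pl: "(UNIV :: pl set) = {P1, P2, P3}" by (auto intro: pl.exhaust)

lemma piG_prof: "piG i (prof x y z) = pick i (fitvec x y z)"
  by (simp add: piG_def)

definition fitpat :: "bool \<Rightarrow> bool \<Rightarrow> bool \<Rightarrow> real \<times> real \<times> real" where
  "fitpat b1 b2 b3 = (if b1 \<and> b2 \<and> \<not> b3 then (9,6,0)
     else if \<not> b1 \<and> b2 \<and> b3 then (0,9,6)
     else if b1 \<and> \<not> b2 \<and> b3 then (6,0,9) else (7,7,7))"

definition Aprof :: "(pl \<Rightarrow> ((pl\<Rightarrow>act)\<Rightarrow>real)) \<Rightarrow> (pl \<Rightarrow> ((pl\<Rightarrow>act)\<Rightarrow>real)) \<Rightarrow> pl \<Rightarrow> act" where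
  "Aprof m \<theta> = (let b1 = (\<theta> P1 = m P1); b2 = (\<theta> P2 = m P2); b3 = (\<theta> P3 = m P3) in
     if b1 \<and> b2 \<and> \<not> b3 then prof X1 X2 (if \<theta> P3 (prof X1 X2 X2) \<le> \<theta> P3 (prof X1 X2 X1) then X1 else X2)
     else if \<not> b1 \<and> b2 \<and> b3 then prof (if \<theta> P1 (prof X2 X1 X2) \<le> \<theta> P1 (prof X1 X1 X2) then X1 else X2) X1 X2
     else if b1 \<and> \<not> b2 \<and> b3 then prof X2 (if \<theta> P2 (prof X2 X2 X1) \<le> \<theta> P2 (prof X2 X1 X1) then X1 else X2) X1
     else prof X1 X1 X1)"

lemma fit_A: "piG i (Aprof m \<theta>) = pick i (fitpat (\<theta> P1 = m P1) (\<theta> P2 = m P2) (\<theta> P3 = m P3))"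
  unfolding Aprof_def Let_def fitpat_def
  by (cases i) (auto simp: piG_prof)

lemma nash_A:
  assumes mc: "\<And>p. m p = (\<lambda>_. c p)"
  and th: "\<And>p. \<theta> p = m p \<or> \<theta> p \<in> R p"
  and res: "\<And>p t x. t \<in> R p \<Longrightarrow> t ((prof X1 X1 X1)(p := x)) \<le> t (prof X1 X1 X1)"
  shows "\<theta> i ((Aprof m \<theta>)(i := x)) \<le> \<theta> i (Aprof m \<theta>)"
proof (cases "\<theta> i = m i")
  case True then show ?thesis using mc by simp
next
  case False
  then have r: "\<theta> i \<in> R i" using th by blast
  show ?thesis
  proof (cases i)
    case P1 then show ?thesis using False res[OF r, of x]
      unfolding Aprof_def Let_def by (cases x) auto
  next
    case P2 then show ?thesis using False res[OF r, of x]
      unfolding Aprof_def Let_def by (cases x) auto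
  next
    case P3 then show ?thesis using False res[OF r, of x]
      unfolding Aprof_def Let_def by (cases x) auto
  qed
qed

lemma avg3:
  fixes \<mu>' :: "pl \<Rightarrow> ((pl\<Rightarrow>act)\<Rightarrow>real) \<Rightarrow> real"
  assumes ij: "i \<noteq> j" "i \<noteq> k" "j \<noteq> k" and U: "(UNIV::pl set) = {i,j,k}"
  and t: "t \<in> supp (\<mu>' i)"
  shows "avgfit \<pi> \<mu>' b' i t = (\<Sum>x\<in>supp (\<mu>' j). \<Sum>y\<in>supp (\<mu>' k).
           \<mu>' j x * \<mu>' k y * EU (\<pi> i) (b' (\<lambda>p. if p = i then t else if p = j then x else y)))"
proof -
  define mk where "mk = (\<lambda>(x::(pl\<Rightarrow>act)\<Rightarrow>real, y::(pl\<Rightarrow>act)\<Rightarrow>real). (\<lambda>p. if p = i then t else if p = j then x else y))"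
  have allp: "p = i \<or> p = j \<or> p = k" for p using U by auto
  have S: "{\<theta>\<in>suppP \<mu>'. \<theta> i = t} = mk ` (supp (\<mu>' j) \<times> supp (\<mu>' k))"
  proof
    show "{\<theta>\<in>suppP \<mu>'. \<theta> i = t} \<subseteq> mk ` (supp (\<mu>' j) \<times> supp (\<mu>' k))"
    proof
      fix \<theta> assume h: "\<theta> \<in> {\<theta>\<in>suppP \<mu>'. \<theta> i = t}"
      have "\<theta> = mk (\<theta> j, \<theta> k)"
        using h allp ij by (auto simp: mk_def fun_eq_iff)
      moreover have "(\<theta> j, \<theta> k) \<in> supp (\<mu>' j) \<times> supp (\<mu>' k)" using h by (auto simp: suppP_def)
      ultimately show "\<theta> \<in> mk ` (supp (\<mu>' j) \<times> supp (\<mu>' k))" by blast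
    qed
  next
    show "mk ` (supp (\<mu>' j) \<times> supp (\<mu>' k)) \<subseteq> {\<theta>\<in>suppP \<mu>'. \<theta> i = t}"
    proof
      fix \<theta> assume "\<theta> \<in> mk ` (supp (\<mu>' j) \<times> supp (\<mu>' k))"
      then obtain x y where xy: "x \<in> supp (\<mu>' j)" "y \<in> supp (\<mu>' k)" "\<theta> = mk (x,y)" by auto
      have "\<theta> p \<in> supp (\<mu>' p)" for p
        using allp[of p] xy t ij by (auto simp: mk_def)
      then show "\<theta> \<in> {\<theta>\<in>suppP \<mu>'. \<theta> i = t}" using xy by (auto simp: suppP_def mk_def)
    qed
  qed
  have inj: "inj_on mk (supp (\<mu>' j) \<times> supp (\<mu>' k))"
  proof (rule inj_onI)
    fix u v assume "u \<in> supp (\<mu>' j) \<times> supp (\<mu>' k)" "v \<in> supp (\<mu>' j) \<times> supp (\<mu>' k)" "mk u = mk v"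
    then have "mk u j = mk v j" "mk u k = mk v k" by auto
    then show "u = v" using ij by (cases u, cases v) (auto simp: mk_def)
  qed
  have P: "(\<Prod>q\<in>UNIV - {i}. \<mu>' q (\<theta> q)) = \<mu>' j (\<theta> j) * \<mu>' k (\<theta> k)" for \<theta>
  proof -
    have "UNIV - {i} = {j, k}" using U ij by auto
    then show ?thesis using ij by simp
  qed
  have "avgfit \<pi> \<mu>' b' i t = (\<Sum>\<theta>\<in>mk ` (supp (\<mu>' j) \<times> supp (\<mu>' k)). \<mu>' j (\<theta> j) * \<mu>' k (\<theta> k) * EU (\<pi> i) (b' \<theta>))"
    unfolding avgfit_def S P ..
  also have "\<dots> = (\<Sum>(x,y)\<in>supp (\<mu>' j) \<times> supp (\<mu>' k). \<mu>' j x * \<mu>' k y * EU (\<pi> i) (b' (mk (x,y))))"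
    using ij by (subst sum.reindex[OF inj]) (auto simp: mk_def intro!: sum.cong)
  also have "\<dots> = (\<Sum>x\<in>supp (\<mu>' j). \<Sum>y\<in>supp (\<mu>' k).
           \<mu>' j x * \<mu>' k y * EU (\<pi> i) (b' (\<lambda>p. if p = i then t else if p = j then x else y)))"
    by (simp add: sum.cartesian_product mk_def)
  finally show ?thesis .
qed

lemma sum_ins:
  fixes f :: "bool \<Rightarrow> real"
  assumes "finite R" "m \<notin> R" "sum \<mu> R = 1" "\<mu> m = 0"
  and w: "w = (\<lambda>x. (1-e) * \<mu> x + e * (if x = m then 1 else 0))"
  shows "(\<Sum>x\<in>insert m R. w x * f (x = m)) = (1-e) * f False + e * f True"
proof -
  have "(\<Sum>x\<in>R. w x * f (x = m)) = (\<Sum>x\<in>R. ((1-e) * f False) * \<mu> x)"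
    using assms by (intro sum.cong) auto
  also have "\<dots> = (1-e) * f False" using assms by (simp add: sum_distrib_left[symmetric])
  finally show ?thesis using assms by simp
qed

lemma avgF:
  fixes \<mu> \<mu>' :: "pl \<Rightarrow> ((pl\<Rightarrow>act)\<Rightarrow>real) \<Rightarrow> real"
  assumes ij: "i \<noteq> j" "i \<noteq> k" "j \<noteq> k" and U: "(UNIV::pl set) = {i,j,k}"
  and t: "t \<in> supp (\<mu>' i)"
  and mu: "\<And>p. finite (supp (\<mu> p)) \<and> sum (\<mu> p) (supp (\<mu> p)) = 1 \<and> m p \<notin> supp (\<mu> p)"
  and mu': "\<And>p. \<mu>' p = (\<lambda>x. (1-e) * \<mu> p x + e * (if x = m p then 1 else 0))"
  and sp: "\<And>p. supp (\<mu>' p) = insert (m p) (supp (\<mu> p))"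
  and F: "\<And>x y. x \<in> supp (\<mu>' j) \<Longrightarrow> y \<in> supp (\<mu>' k) \<Longrightarrow>
      EU (\<pi> i) (b' (\<lambda>p. if p = i then t else if p = j then x else y)) = F (x = m j) (y = m k)"
  shows "avgfit \<pi> \<mu>' b' i t = (1-e)*((1-e)*F False False + e*F False True) + e*((1-e)*F True False + e * F True True)"
proof -
  have z: "\<mu> p (m p) = 0" for p using mu[of p] by (auto simp: supp_def)
  have "avgfit \<pi> \<mu>' b' i t = (\<Sum>x\<in>supp (\<mu>' j). \<Sum>y\<in>supp (\<mu>' k). \<mu>' j x * \<mu>' k y * F (x = m j) (y = m k))"
    unfolding avg3[where \<mu>'=\<mu>' and i=i and j=j and k=k and t=t and \<pi>=\<pi> and b'=b', OF ij U t] by (intro sum.cong refl) (simp add: F)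
  also have "\<dots> = (\<Sum>x\<in>supp (\<mu>' j). \<mu>' j x * (\<Sum>y\<in>supp (\<mu>' k). \<mu>' k y * F (x = m j) (y = m k)))"
    by (simp add: sum_distrib_left mult.assoc)
  also have "\<dots> = (\<Sum>x\<in>supp (\<mu>' j). \<mu>' j x * ((1-e) * F (x = m j) False + e * F (x = m j) True))"
    unfolding sp[of k] using mu[of k] z[of k] mu'[of k]
    by (intro sum.cong refl, subst sum_ins[where \<mu>="\<mu> k" and e=e]) auto
  also have "\<dots> = (1-e)*((1-e)*F False False + e*F False True) + e*((1-e)*F True False + e * F True True)"
    unfolding sp[of j] using mu[of j] z[of j] mu'[of j]
    by (subst sum_ins[where \<mu>="\<mu> j" and e=e and f="\<lambda>b. (1-e) * F b False + e * F b True"]) auto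
  finally show ?thesis .
qed

lemma new_const:
  assumes "finite (S :: ('b \<Rightarrow> real) set)"
  shows "\<exists>c::real. (\<lambda>_. c) \<notin> S"
proof (rule ccontr)
  assume "\<not> ?thesis"
  then have "range (\<lambda>c::real. (\<lambda>_::'b. c)) \<subseteq> S" by auto
  then have "finite (range (\<lambda>c::real. (\<lambda>_::'b. c)))" using assms finite_subset by blast
  moreover have "inj (\<lambda>c::real. (\<lambda>_::'b. c))" by (auto simp: inj_on_def fun_eq_iff)
  ultimately have "finite (UNIV::real set)" using finite_imageD by blast
  then show False using infinite_UNIV_char_0[where 'a=real] by blast
qed

lemma pos_of_mixed:
  assumes "mixed (s :: act \<Rightarrow> real)" shows "\<exists>x. 0 < s x"
proof (rule ccontr)
  assume "\<not> ?thesis"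
  then have "s X1 = 0" "s X2 = 0" using assms unfolding mixed_def by (auto simp: not_less intro: antisym)
  then show False using assms unfolding mixed_def UNIV_act by simp
qed

theorem mainTheorem8:
  shows "strict_nash_pure piG (\<lambda>_. X1) \<and> pareto_efficient piG (\<lambda>_. X1)
         \<and> \<not> stable_profile piG (\<lambda>_. X1)"
proof (intro conjI)
  show "strict_nash_pure piG (\<lambda>_. X1)"
    unfolding strict_nash_pure_def allX1
  proof (intro allI impI)
    fix i x assume "x \<noteq> prof X1 X1 X1 i"
    then show "piG i ((prof X1 X1 X1)(i := x)) < piG i (prof X1 X1 X1)"
      by (cases i; cases x) (auto simp: piG_prof)
  qed
next
  show "pareto_efficient piG (\<lambda>_. X1)"
    unfolding pareto_efficient_def
  proof
    assume "\<exists>a'. (\<forall>i. piG i (\<lambda>_. X1) \<le> piG i a') \<and> (\<exists>i. piG i (\<lambda>_. X1) < piG i a')"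
    then obtain a' i where h: "\<forall>i. piG i (\<lambda>_. X1) \<le> piG i a'" "piG i (\<lambda>_. X1) < piG i a'" by blast
    have "piG P1 (\<lambda>_. X1) \<le> piG P1 a'" "piG P2 (\<lambda>_. X1) \<le> piG P2 a'" "piG P3 (\<lambda>_. X1) \<le> piG P3 a'"
      using h by auto
    with h(2) show False
      by (cases "a' P1"; cases "a' P2"; cases "a' P3"; cases i) (auto simp: piG_def)
  qed
next
  show "\<not> stable_profile piG (\<lambda>_. X1)"
  proof
    assume "stable_profile piG (\<lambda>_. X1)"
    then obtain \<mu> b where pd: "popdist \<mu>" and eq: "equil \<mu> b" and st: "stable piG \<mu> b"
      and oc: "\<And>a'. outcome \<mu> b a' = (if a' = (\<lambda>_. X1) then 1 else 0)"
      unfolding stable_profile_def by blast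
    have fin: "finite (supp (\<mu> p))" and nn: "\<And>x. 0 \<le> \<mu> p x" and s1: "sum (\<mu> p) (supp (\<mu> p)) = 1" for p
      using pd unfolding popdist_def findist_def by auto
    have ne: "\<exists>r. r \<in> supp (\<mu> p)" for p
    proof (rule ccontr)
      assume "\<not> ?thesis" then have "supp (\<mu> p) = {}" by auto
      then show False using s1[of p] by simp
    qed
    then obtain r where r: "\<And>p. r p \<in> supp (\<mu> p)" by metis
    have finP: "finite (suppP \<mu>)"
    proof -
      have "suppP \<mu> = Pi\<^sub>E UNIV (\<lambda>i. supp (\<mu> i))"
        unfolding PiE_UNIV_domain by (auto simp: suppP_def Pi_def)
      then show ?thesis using fin by (simp add: finite_PiE)
    qed
    have mixb: "\<And>\<theta> i. \<theta> \<in> suppP \<mu> \<Longrightarrow> mixed (b \<theta> i)"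
      using eq unfolding equil_def nash_def by blast
    have bX: "b \<theta> = dlt (prof X1 X1 X1)" if th: "\<theta> \<in> suppP \<mu>" for \<theta>
    proof -
      have term0: "(\<Prod>i\<in>UNIV. b \<theta> i (a' i)) = 0" if a': "a' \<noteq> (\<lambda>_. X1)" for a'
      proof -
        have "outcome \<mu> b a' = 0" using oc a' by simp
        then have "(\<Sum>\<theta>\<in>suppP \<mu>. (\<Prod>i\<in>UNIV. \<mu> i (\<theta> i)) * (\<Prod>i\<in>UNIV. b \<theta> i (a' i))) = 0"
          unfolding outcome_def .
        moreover have "\<forall>\<theta>'\<in>suppP \<mu>. 0 \<le> (\<Prod>i\<in>UNIV. \<mu> i (\<theta>' i)) * (\<Prod>i\<in>UNIV. b \<theta>' i (a' i))"
          using nn mixb by (auto intro!: mult_nonneg_nonneg prod_nonneg simp: mixed_def)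
        ultimately have "(\<Prod>i\<in>UNIV. \<mu> i (\<theta> i)) * (\<Prod>i\<in>UNIV. b \<theta> i (a' i)) = 0"
          using finP th by (simp add: sum_nonneg_eq_0_iff)
        moreover have "0 < (\<Prod>i\<in>UNIV. \<mu> i (\<theta> i))"
        proof (rule prod_pos)
          fix i show "0 < \<mu> i (\<theta> i)" using th nn[of i "\<theta> i"] by (auto simp: suppP_def supp_def less_le)
        qed
        ultimately show ?thesis by (metis mult_eq_0_iff order_less_irrefl)
      qed
      obtain g where g: "\<And>j. 0 < b \<theta> j (g j)" using pos_of_mixed[OF mixb[OF th]] by metis
      have z2: "b \<theta> i X2 = 0" for i
      proof (rule ccontr)
        assume "b \<theta> i X2 \<noteq> 0"
        then have pos: "0 < b \<theta> i X2" using mixb[OF th, of i] unfolding mixed_def by (metis less_eq_real_def)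
        have "g(i := X2) \<noteq> (\<lambda>_. X1)" by (metis act.distinct(1) fun_upd_same)
        then have "(\<Prod>j\<in>UNIV. b \<theta> j ((g(i := X2)) j)) = 0" by (rule term0)
        moreover have "0 < (\<Prod>j\<in>UNIV. b \<theta> j ((g(i := X2)) j))"
          using pos g by (intro prod_pos) auto
        ultimately show False by (metis order_less_irrefl)
      qed
      have o1: "b \<theta> i X1 = 1" for i
        using mixb[OF th, of i] z2[of i] unfolding mixed_def UNIV_act by simp
      show ?thesis
      proof (rule ext, rule ext)
        fix i x show "b \<theta> i x = dlt (prof X1 X1 X1) i x"
          using o1 z2 by (cases x; cases i) (auto simp: dlt_def)
      qed
    qed
    have resX1: "t ((prof X1 X1 X1)(p := x)) \<le> t (prof X1 X1 X1)" if t: "t \<in> supp (\<mu> p)" for p t x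
    proof -
      define \<theta>0 where "\<theta>0 = (\<lambda>j. if j = p then t else r j)"
      have th0: "\<theta>0 \<in> suppP \<mu>" using t r by (auto simp: suppP_def \<theta>0_def)
      then have "nash \<theta>0 (b \<theta>0)" using eq unfolding equil_def by blast
      then have "nash \<theta>0 (dlt (prof X1 X1 X1))" using bX[OF th0] by simp
      then have "\<theta>0 p ((prof X1 X1 X1)(p := x)) \<le> \<theta>0 p (prof X1 X1 X1)"
        unfolding nash_pure by blast
      then show ?thesis by (simp add: \<theta>0_def)
    qed
    have "\<forall>p. \<exists>c. (\<lambda>_. c) \<notin> supp (\<mu> p)" using new_const fin by blast
    then obtain c where c: "\<And>p. (\<lambda>_. c p) \<notin> supp (\<mu> p)" by metis
    define m where "m = (\<lambda>p. (\<lambda>_::pl\<Rightarrow>act. c p))"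
    have mc: "\<And>p. m p = (\<lambda>_. c p)" by (simp add: m_def)
    have mns: "m p \<notin> supp (\<mu> p)" for p using c by (simp add: m_def)
    have cond: "UNIV \<noteq> ({} :: pl set) \<and> (\<forall>j\<in>UNIV. m j \<notin> supp (\<mu> j))" using mns by auto
    have sst: "\<forall>J thm. J \<noteq> {} \<and> (\<forall>j\<in>J. thm j \<notin> supp (\<mu> j)) \<longrightarrow>
        (\<exists>eb. 0 < eb \<and> eb < 1 \<and>
          (\<forall>eps. (\<forall>j\<in>J. 0 < eps j \<and> eps j < 1 \<and> eps j < eb) \<longrightarrow>
             (\<forall>b'. equil (postentry \<mu> J thm eps) b' \<and> (\<forall>\<theta>\<in>suppP \<mu>. b' \<theta> = b \<theta>) \<longrightarrow>
                ((\<exists>j\<in>J. \<forall>t\<in>supp (\<mu> j).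
                    avgfit piG (postentry \<mu> J thm eps) b' j t
                      > avgfit piG (postentry \<mu> J thm eps) b' j (thm j))
                 \<or> balanced piG (postentry \<mu> J thm eps) b'))))"
      using st unfolding stable_def by (rule conjunct2)
    have ex: "\<exists>eb. 0 < eb \<and> eb < 1 \<and>
          (\<forall>eps. (\<forall>j\<in>UNIV. 0 < eps j \<and> eps j < 1 \<and> eps j < eb) \<longrightarrow>
             (\<forall>b'. equil (postentry \<mu> UNIV m eps) b' \<and> (\<forall>\<theta>\<in>suppP \<mu>. b' \<theta> = b \<theta>) \<longrightarrow>
                ((\<exists>j\<in>UNIV. \<forall>t\<in>supp (\<mu> j).
                    avgfit piG (postentry \<mu> UNIV m eps) b' j t
                      > avgfit piG (postentry \<mu> UNIV m eps) b' j (m j))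
                 \<or> balanced piG (postentry \<mu> UNIV m eps) b')))"
      using mp[OF spec[OF spec[OF sst, of UNIV], of m] cond] .
    then obtain eb where eb: "0 < eb" "eb < 1" and
      stb: "\<forall>eps. (\<forall>j\<in>UNIV. 0 < eps j \<and> eps j < 1 \<and> eps j < eb) \<longrightarrow>
             (\<forall>b'. equil (postentry \<mu> UNIV m eps) b' \<and> (\<forall>\<theta>\<in>suppP \<mu>. b' \<theta> = b \<theta>) \<longrightarrow>
                ((\<exists>j\<in>UNIV. \<forall>t\<in>supp (\<mu> j).
                    avgfit piG (postentry \<mu> UNIV m eps) b' j t
                      > avgfit piG (postentry \<mu> UNIV m eps) b' j (m j))
                 \<or> balanced piG (postentry \<mu> UNIV m eps) b'))"
      by (elim exE conjE) (rule that; assumption)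
    define e where "e = eb / 2"
    have e: "0 < e" "e < 1" "e < eb" using eb by (auto simp: e_def)
    define \<mu>' where "\<mu>' = postentry \<mu> UNIV m (\<lambda>_. e)"
    have mu': "\<mu>' p = (\<lambda>x. (1-e) * \<mu> p x + e * (if x = m p then 1 else 0))" for p
      by (simp add: \<mu>'_def postentry_def)
    have sp: "supp (\<mu>' p) = insert (m p) (supp (\<mu> p))" for p
    proof -
      have z: "\<mu> p (m p) = 0" using mns[of p] by (simp add: supp_def)
      show ?thesis using e z unfolding mu' supp_def by auto
    qed
    define b' where "b' = (\<lambda>\<theta>. dlt (Aprof m \<theta>))"
    have equil': "equil \<mu>' b'"
      unfolding equil_def b'_def nash_pure
    proof (intro ballI allI)
      fix \<theta> i x assume th: "\<theta> \<in> suppP \<mu>'"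
      have "\<theta> p = m p \<or> \<theta> p \<in> supp (\<mu> p)" for p using th sp by (auto simp: suppP_def)
      then show "\<theta> i ((Aprof m \<theta>)(i := x)) \<le> \<theta> i (Aprof m \<theta>)"
        by (rule nash_A[OF mc]) (rule resX1)
    qed
    have agree: "\<forall>\<theta>\<in>suppP \<mu>. b' \<theta> = b \<theta>"
    proof
      fix \<theta> assume th: "\<theta> \<in> suppP \<mu>"
      have "\<theta> p \<noteq> m p" for p
      proof -
        have "\<theta> p \<in> supp (\<mu> p)" using th by (simp add: suppP_def)
        then show ?thesis using mns[of p] by metis
      qed
      then have "Aprof m \<theta> = prof X1 X1 X1" unfolding Aprof_def Let_def by auto
      then show "b' \<theta> = b \<theta>" using bX[OF th] by (simp add: b'_def)
    qed
    have disj: "(\<exists>j\<in>UNIV. \<forall>t\<in>supp (\<mu> j). avgfit piG \<mu>' b' j t > avgfit piG \<mu>' b' j (m j))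
                 \<or> balanced piG \<mu>' b'"
    proof -
      have pre: "\<forall>j\<in>UNIV. 0 < (\<lambda>_::pl. e) j \<and> (\<lambda>_::pl. e) j < 1 \<and> (\<lambda>_::pl. e) j < eb" using e by simp
      have pb: "equil (postentry \<mu> UNIV m (\<lambda>_. e)) b' \<and> (\<forall>\<theta>\<in>suppP \<mu>. b' \<theta> = b \<theta>)"
        using equil' agree unfolding \<mu>'_def by (rule conjI)
      show ?thesis using spec[OF mp[OF spec[OF stb, of "\<lambda>_. e"] pre], of b'] pb unfolding \<mu>'_def[symmetric]
        by (rule mp)
    qed
    have muA: "\<And>p. finite (supp (\<mu> p)) \<and> sum (\<mu> p) (supp (\<mu> p)) = 1 \<and> m p \<notin> supp (\<mu> p)"
      using fin s1 mns by blast
    have EUb: "EU (piG i) (b' \<theta>) = pick i (fitpat (\<theta> P1 = m P1) (\<theta> P2 = m P2) (\<theta> P3 = m P3))" for i \<theta>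
      by (simp add: b'_def EU_pure fit_A)
    have U1: "(UNIV::pl set) = {P1,P2,P3}" and U2: "(UNIV::pl set) = {P2,P1,P3}" and U3: "(UNIV::pl set) = {P3,P1,P2}"
      using UNIV_pl by auto
    have R1: "avgfit piG \<mu>' b' P1 t = 7 - 7 * e^2" if "t \<in> supp (\<mu> P1)" for t
    proof -
      have tm: "t \<noteq> m P1" using that mns by auto
      have "avgfit piG \<mu>' b' P1 t = (1-e)*((1-e)*pick P1 (fitpat False False False) + e*pick P1 (fitpat False False True)) + e*((1-e)*pick P1 (fitpat False True False) + e*pick P1 (fitpat False True True))"
        by (rule avgF[where F="\<lambda>x y. pick P1 (fitpat False x y)", OF _ _ _ U1 _ muA mu' sp])
           (use that tm in \<open>simp_all add: sp EUb\<close>)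
      then show ?thesis by (simp add: fitpat_def power2_eq_square algebra_simps)
    qed
    have M1: "avgfit piG \<mu>' b' P1 (m P1) = 7 + e - e^2"
    proof -
      have "avgfit piG \<mu>' b' P1 (m P1) = (1-e)*((1-e)*pick P1 (fitpat True False False) + e*pick P1 (fitpat True False True)) + e*((1-e)*pick P1 (fitpat True True False) + e*pick P1 (fitpat True True True))"
        by (rule avgF[where F="\<lambda>x y. pick P1 (fitpat True x y)", OF _ _ _ U1 _ muA mu' sp])
           (simp_all add: sp EUb)
      then show ?thesis by (simp add: fitpat_def power2_eq_square algebra_simps)
    qed
    have R2: "avgfit piG \<mu>' b' P2 t = 7 - 7 * e^2" if "t \<in> supp (\<mu> P2)" for t
    proof -
      have tm: "t \<noteq> m P2" using that mns by auto
      have "avgfit piG \<mu>' b' P2 t = (1-e)*((1-e)*pick P2 (fitpat False False False) + e*pick P2 (fitpat False False True)) + e*((1-e)*pick P2 (fitpat True False False) + e*pick P2 (fitpat True False True))"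
        by (rule avgF[where F="\<lambda>x y. pick P2 (fitpat x False y)", OF _ _ _ U2 _ muA mu' sp])
           (use that tm in \<open>simp_all add: sp EUb\<close>)
      then show ?thesis by (simp add: fitpat_def power2_eq_square algebra_simps)
    qed
    have M2: "avgfit piG \<mu>' b' P2 (m P2) = 7 + e - e^2"
    proof -
      have "avgfit piG \<mu>' b' P2 (m P2) = (1-e)*((1-e)*pick P2 (fitpat False True False) + e*pick P2 (fitpat False True True)) + e*((1-e)*pick P2 (fitpat True True False) + e*pick P2 (fitpat True True True))"
        by (rule avgF[where F="\<lambda>x y. pick P2 (fitpat x True y)", OF _ _ _ U2 _ muA mu' sp])
           (simp_all add: sp EUb)
      then show ?thesis by (simp add: fitpat_def power2_eq_square algebra_simps)
    qed
    have R3: "avgfit piG \<mu>' b' P3 t = 7 - 7 * e^2" if "t \<in> supp (\<mu> P3)" for t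
    proof -
      have tm: "t \<noteq> m P3" using that mns by auto
      have "avgfit piG \<mu>' b' P3 t = (1-e)*((1-e)*pick P3 (fitpat False False False) + e*pick P3 (fitpat False True False)) + e*((1-e)*pick P3 (fitpat True False False) + e*pick P3 (fitpat True True False))"
        by (rule avgF[where F="\<lambda>x y. pick P3 (fitpat x y False)", OF _ _ _ U3 _ muA mu' sp])
           (use that tm in \<open>simp_all add: sp EUb\<close>)
      then show ?thesis by (simp add: fitpat_def power2_eq_square algebra_simps)
    qed
    have M3: "avgfit piG \<mu>' b' P3 (m P3) = 7 + e - e^2"
    proof -
      have "avgfit piG \<mu>' b' P3 (m P3) = (1-e)*((1-e)*pick P3 (fitpat False False True) + e*pick P3 (fitpat False True True)) + e*((1-e)*pick P3 (fitpat True False True) + e*pick P3 (fitpat True True True))"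
        by (rule avgF[where F="\<lambda>x y. pick P3 (fitpat x y True)", OF _ _ _ U3 _ muA mu' sp])
           (simp_all add: sp EUb)
      then show ?thesis by (simp add: fitpat_def power2_eq_square algebra_simps)
    qed
    have lt: "7 - 7 * e^2 < 7 + e - e^2"
    proof -
      have "0 < e * e" using e by simp
      then show ?thesis using e unfolding power2_eq_square by linarith
    qed
    show False
      using disj
    proof
      assume "\<exists>j\<in>UNIV. \<forall>t\<in>supp (\<mu> j). avgfit piG \<mu>' b' j t > avgfit piG \<mu>' b' j (m j)"
      then obtain j where j: "\<forall>t\<in>supp (\<mu> j). avgfit piG \<mu>' b' j t > avgfit piG \<mu>' b' j (m j)" by blast
      then have "avgfit piG \<mu>' b' j (r j) > avgfit piG \<mu>' b' j (m j)" using r by blast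
      then show False using lt R1[OF r] R2[OF r] R3[OF r] M1 M2 M3 by (cases j) auto
    next
      assume "balanced piG \<mu>' b'"
      then have "avgfit piG \<mu>' b' P1 (r P1) = avgfit piG \<mu>' b' P1 (m P1)"
        unfolding balanced_def using r sp by blast
      then show False using lt R1[OF r] M1 by simp
    qed
  qed
qed

end
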